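(* Let $G$ be a simple plane graph on $n\geq 2$ vertices that contains neither $K_4$ nor $C_6$ as a subgraph, and such that every maximal $2$-connected subgraph of $G$ has at most $5$ vertices. Then $e(G)\leq \frac{31}{15}n-\frac{7}{3}$.
   Context: $K_4$ is the complete graph on $4$ vertices, $C_6$ the cycle on $6$ vertices; $e(G)$ is the number of edges of $G$. A maximal $2$-connected subgraph (a block) is understood in the usual sense, where a single edge (bridge) counts as a block on $2$ vertices. *)

theory Defs
  imports "HOL-Analysis.Analysis"
begin

definition simple_graph :: "'a set \<Rightarrow> 'a set set \<Rightarrow> bool" where
  "simple_graph V E \<longleftrightarrow> finite V \<and>
     (\<forall>e\<in>E. \<exists>u v. u \<in> V \<and> v \<in> V \<and> u \<noteq> v \<and> e = {u, v})"

definition planar_graph :: "'a set \<Rightarrow> 'a set set \<Rightarrow> bool" where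
  "planar_graph V E \<longleftrightarrow>
    (\<exists>(pos :: 'a \<Rightarrow> real^2) (\<gamma> :: 'a set \<Rightarrow> real \<Rightarrow> real^2).
       inj_on pos V \<and>
       (\<forall>u v. {u, v} \<in> E \<longrightarrow>
           arc (\<gamma> {u, v}) \<and> pathstart (\<gamma> {u, v}) = pos u \<and> pathfinish (\<gamma> {u, v}) = pos v
         \<or> arc (\<gamma> {u, v}) \<and> pathstart (\<gamma> {u, v}) = pos v \<and> pathfinish (\<gamma> {u, v}) = pos u) \<and>
       (\<forall>e\<in>E. path_image (\<gamma> e) \<inter> pos ` V = pos ` e) \<and>
       (\<forall>e\<in>E. \<forall>e'\<in>E. e \<noteq> e' \<longrightarrow> path_image (\<gamma> e) \<inter> path_image (\<gamma> e') \<subseteq> pos ` (e \<inter> e')))"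

definition contains_subgraph :: "'b set \<Rightarrow> 'b set set \<Rightarrow> 'a set \<Rightarrow> 'a set set \<Rightarrow> bool" where
  "contains_subgraph VH EH V E \<longleftrightarrow>
     (\<exists>f. inj_on f VH \<and> f ` VH \<subseteq> V \<and> (\<forall>e\<in>EH. f ` e \<in> E))"

definition K4_verts :: "nat set" where "K4_verts = {0..<4}"
definition K4_edges :: "nat set set" where
  "K4_edges = {{i, j} | i j. i < 4 \<and> j < 4 \<and> i \<noteq> j}"

definition C6_verts :: "nat set" where "C6_verts = {0..<6}"
definition C6_edges :: "nat set set" where
  "C6_edges = {{i, (i + 1) mod 6} | i. i < 6}"

definition connected_on :: "'a set set \<Rightarrow> 'a set \<Rightarrow> bool" where
  "connected_on E S \<longleftrightarrow>
     (\<forall>u\<in>S. \<forall>v\<in>S. (\<lambda>x y. x \<in> S \<and> y \<in> S \<and> {x, y} \<in> E)\<^sup>*\<^sup>* u v)"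

text \<open>S spans a 2-connected subgraph in the block sense: at least 2 vertices, connected,
  and no cut vertex (so a single edge counts, on 2 vertices).\<close>
definition biconnected_on :: "'a set \<Rightarrow> 'a set set \<Rightarrow> 'a set \<Rightarrow> bool" where
  "biconnected_on V E S \<longleftrightarrow> S \<subseteq> V \<and> 2 \<le> card S \<and> connected_on E S \<and>
     (\<forall>x\<in>S. connected_on E (S - {x}))"

definition is_block :: "'a set \<Rightarrow> 'a set set \<Rightarrow> 'a set \<Rightarrow> bool" where
  "is_block V E B \<longleftrightarrow> biconnected_on V E B \<and>
     (\<forall>S. biconnected_on V E S \<and> B \<subseteq> S \<longrightarrow> S = B)"

end

theory Submission
  imports Defs
begin

definition P2 :: "'a set \<Rightarrow> 'a set set" where "P2 U = {B. B \<subseteq> U \<and> card B = 2}"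

lemma card_P2: "finite U \<Longrightarrow> card (P2 U) = card U choose 2"
  unfolding P2_def by (simp add: n_subsets)

lemma finite_P2: "finite U \<Longrightarrow> finite (P2 U)"
  unfolding P2_def by (rule finite_subset[of _ "Pow U"]) auto

lemma K4_lemma:
  assumes "W \<subseteq> V" "card W = 4" "\<forall>u\<in>W. \<forall>v\<in>W. u \<noteq> v \<longrightarrow> {u,v} \<in> E"
  shows "contains_subgraph K4_verts K4_edges V E"
proof -
  have "finite W" using assms(2) card.infinite by fastforce
  then obtain f where f: "bij_betw f {0..<4::nat} W"
    using ex_bij_betw_nat_finite assms(2) by metis
  show ?thesis unfolding contains_subgraph_def K4_verts_def K4_edges_def
  proof (intro exI[of _ f] conjI)
    show "inj_on f {0..<4}" using f bij_betw_imp_inj_on by blast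
    show "f ` {0..<4} \<subseteq> V" using f assms(1) bij_betw_imp_surj_on by blast
    show "\<forall>e\<in>{{i, j} |i j. i < 4 \<and> j < 4 \<and> i \<noteq> j}. f ` e \<in> E"
    proof
      fix e assume "e \<in> {{i, j} |i j. i < (4::nat) \<and> j < 4 \<and> i \<noteq> j}"
      then obtain i j where ij: "e = {i,j}" "i<4" "j<4" "i\<noteq>j" by blast
      then have "f i \<in> W" "f j \<in> W" "f i \<noteq> f j" using f by (auto simp: bij_betw_def inj_on_def)
      then show "f ` e \<in> E" using assms(3) ij(1) by auto
    qed
  qed
qed

lemma dense_K4:
  assumes "finite U" "U \<subseteq> V" "card U = 4 \<or> card U = 5" "card (P2 U - E) \<le> card U - 4"
  shows "contains_subgraph K4_verts K4_edges V E"
proof -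
  have fin: "finite (P2 U - E)" using finite_P2[OF assms(1)] by auto
  have "\<exists>W. W \<subseteq> U \<and> card W = 4 \<and> P2 W \<inter> (P2 U - E) = {}"
  proof (cases "card U = 4")
    case True
    then have "P2 U - E = {}" using assms(4) fin by auto
    then show ?thesis using True by auto
  next
    case False
    then have c5: "card U = 5" using assms(3) by auto
    have "\<exists>w\<in>U. \<forall>B \<in> P2 U - E. w \<in> B"
    proof (cases "P2 U - E = {}")
      case True
      have "U \<noteq> {}" using c5 by auto
      then show ?thesis using True by auto
    next
      case False
      then have "card (P2 U - E) = 1" using assms(4) c5 fin by (simp add: card_gt_0_iff Suc_le_eq le_Suc_eq)
      then obtain B where B: "P2 U - E = {B}" using card_1_singletonE by blast
      then have "B \<subseteq> U" "card B = 2" unfolding P2_def by auto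
      then obtain w where "w \<in> B" by fastforce
      then show ?thesis using B \<open>B \<subseteq> U\<close> by auto
    qed
    then obtain w where w: "w \<in> U" "\<forall>B \<in> P2 U - E. w \<in> B" by blast
    have "card (U - {w}) = 4" using c5 w(1) assms(1) by simp
    moreover have "P2 (U - {w}) \<inter> (P2 U - E) = {}" using w(2) unfolding P2_def by blast
    ultimately show ?thesis by blast
  qed
  then obtain W where W: "W \<subseteq> U" "card W = 4" "P2 W \<inter> (P2 U - E) = {}" by blast
  show ?thesis
  proof (rule K4_lemma[of W])
    show "W \<subseteq> V" using W assms(2) by auto
    show "card W = 4" by fact
    show "\<forall>u\<in>W. \<forall>v\<in>W. u \<noteq> v \<longrightarrow> {u, v} \<in> E"
    proof (intro ballI impI)
      fix u v assume uv: "u \<in> W" "v \<in> W" "u \<noteq> v"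
      then have "{u,v} \<in> P2 W" "{u,v} \<in> P2 U" using W(1) unfolding P2_def by auto
      then show "{u,v} \<in> E" using W(3) by blast
    qed
  qed
qed

lemma not_conn_split:
  assumes "\<not> connected_on E S"
  obtains A C where "A \<union> C = S" "A \<inter> C = {}" "A \<noteq> {}" "C \<noteq> {}"
    "\<forall>a\<in>A. \<forall>c\<in>C. {a,c} \<notin> E"
proof -
  let ?R = "\<lambda>x y. x \<in> S \<and> y \<in> S \<and> {x, y} \<in> E"
  obtain u v where uv: "u \<in> S" "v \<in> S" "\<not> ?R\<^sup>*\<^sup>* u v"
    using assms unfolding connected_on_def by blast
  define A where "A = {w\<in>S. ?R\<^sup>*\<^sup>* u w}"
  define C where "C = S - A"
  have "u \<in> A" using uv unfolding A_def by auto
  moreover have "v \<in> C" using uv unfolding A_def C_def by auto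
  moreover have "\<forall>a\<in>A. \<forall>c\<in>C. {a,c} \<notin> E"
  proof (intro ballI notI)
    fix a c assume "a \<in> A" "c \<in> C" "{a,c} \<in> E"
    then have "?R\<^sup>*\<^sup>* u c" unfolding A_def C_def
      by (auto intro: rtranclp.rtrancl_into_rtrancl)
    then show False using \<open>c \<in> C\<close> unfolding A_def C_def by auto
  qed
  moreover have "A \<union> C = S" "A \<inter> C = {}" unfolding A_def C_def by auto
  ultimately show ?thesis using that by blast
qed

lemma main:
  assumes sg: "simple_graph V E" and nK4: "\<not> contains_subgraph K4_verts K4_edges V E"
    and bc: "\<forall>S. biconnected_on V E S \<longrightarrow> card S \<le> 5"
  shows "U \<subseteq> V \<Longrightarrow> U \<noteq> {} \<Longrightarrow> card {e\<in>E. e \<subseteq> U} + 2 \<le> 2 * card U"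
proof (induction "card U" arbitrary: U rule: less_induct)
  case less
  have finU: "finite U" using less.prems sg simple_graph_def finite_subset by metis
  have edge: "\<And>e. e \<in> E \<Longrightarrow> \<exists>u v. u \<in> V \<and> v \<in> V \<and> u \<noteq> v \<and> e = {u,v}"
    using sg unfolding simple_graph_def by blast
  have EU_sub: "{e\<in>E. e \<subseteq> U} \<subseteq> P2 U"
    unfolding P2_def using edge by fastforce
  have finEU: "finite {e\<in>E. e \<subseteq> U}" using finite_subset[OF EU_sub finite_P2[OF finU]] .
  have finEsub: "\<And>X. finite {e\<in>E. e \<subseteq> X \<and> X \<subseteq> U}"
    by (rule finite_subset[OF _ finEU]) auto
  show ?case
  proof (cases "\<exists>A C. A \<union> C = U \<and> card (A \<inter> C) \<le> 1 \<and> A - C \<noteq> {} \<and> C - A \<noteq> {} \<and>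
      (\<forall>e\<in>E. e \<subseteq> U \<longrightarrow> e \<subseteq> A \<or> e \<subseteq> C)")
    case True
    then obtain A C where AC: "A \<union> C = U" "card (A \<inter> C) \<le> 1" "A - C \<noteq> {}" "C - A \<noteq> {}"
      "\<forall>e\<in>E. e \<subseteq> U \<longrightarrow> e \<subseteq> A \<or> e \<subseteq> C" by blast
    have sub: "A \<subseteq> U" "C \<subseteq> U" using AC(1) by auto
    have "A \<noteq> U" "C \<noteq> U" using AC(3,4) AC(1) by auto
    then have lt: "card A < card U" "card C < card U"
      using sub finU by (auto intro: psubset_card_mono)
    have ne: "A \<noteq> {}" "C \<noteq> {}" using AC(3,4) by auto
    have IA: "card {e\<in>E. e \<subseteq> A} + 2 \<le> 2 * card A"
      using less.hyps[OF lt(1)] sub(1) less.prems(1) ne(1) by auto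
    have IC: "card {e\<in>E. e \<subseteq> C} + 2 \<le> 2 * card C"
      using less.hyps[OF lt(2)] sub(2) less.prems(1) ne(2) by auto
    have "{e\<in>E. e \<subseteq> U} \<subseteq> {e\<in>E. e \<subseteq> A} \<union> {e\<in>E. e \<subseteq> C}" using AC(5) by auto
    moreover have "finite ({e\<in>E. e \<subseteq> A} \<union> {e\<in>E. e \<subseteq> C})"
      by (rule finite_subset[OF _ finEU]) (use sub in auto)
    ultimately have "card {e\<in>E. e \<subseteq> U} \<le> card ({e\<in>E. e \<subseteq> A} \<union> {e\<in>E. e \<subseteq> C})"
      by (rule card_mono[rotated])
    also have "\<dots> \<le> card {e\<in>E. e \<subseteq> A} + card {e\<in>E. e \<subseteq> C}" by (rule card_Un_le)
    finally have e1: "card {e\<in>E. e \<subseteq> U} \<le> card {e\<in>E. e \<subseteq> A} + card {e\<in>E. e \<subseteq> C}" .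
    have "card A + card C = card U + card (A \<inter> C)"
      using card_Un_Int[of A C] finU sub AC(1) finite_subset by metis
    then show ?thesis using e1 IA IC AC(2) by linarith
  next
    case False
    note nosplit = False
    show ?thesis
    proof (cases "card U = 1")
      case True
      then obtain a where "U = {a}" using card_1_singletonE by blast
      then have e0: "{e\<in>E. e \<subseteq> U} = {}" using edge by fastforce
      show ?thesis unfolding e0 using True by simp
    next
      case False
      then have c2: "card U \<ge> 2" using less.prems(2) finU
        by (metis One_nat_def Suc_1 Suc_leI card_gt_0_iff le_antisym not_less_eq_eq)
      have conn: "connected_on E U"
      proof (rule ccontr)
        assume "\<not> connected_on E U"
        then obtain A C where AC: "A \<union> C = U" "A \<inter> C = {}" "A \<noteq> {}" "C \<noteq> {}"
          "\<forall>a\<in>A. \<forall>c\<in>C. {a,c} \<notin> E" by (rule not_conn_split)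
        have "\<forall>e\<in>E. e \<subseteq> U \<longrightarrow> e \<subseteq> A \<or> e \<subseteq> C"
        proof (intro ballI impI)
          fix e assume e: "e \<in> E" "e \<subseteq> U"
          then obtain p q where "e = {p,q}" using edge by blast
          then show "e \<subseteq> A \<or> e \<subseteq> C" using e AC(1,5) by (auto simp: insert_commute)
        qed
        moreover have "card (A \<inter> C) \<le> 1" "A - C \<noteq> {}" "C - A \<noteq> {}" using AC by auto
        ultimately show False using nosplit AC(1) by blast
      qed
      have conn2: "\<forall>x\<in>U. connected_on E (U - {x})"
      proof (intro ballI, rule ccontr)
        fix x assume x: "x \<in> U" "\<not> connected_on E (U - {x})"
        then obtain A C where AC: "A \<union> C = U - {x}" "A \<inter> C = {}" "A \<noteq> {}" "C \<noteq> {}"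
          "\<forall>a\<in>A. \<forall>c\<in>C. {a,c} \<notin> E" using not_conn_split by metis
        have "\<forall>e\<in>E. e \<subseteq> U \<longrightarrow> e \<subseteq> insert x A \<or> e \<subseteq> insert x C"
        proof (intro ballI impI)
          fix e assume e: "e \<in> E" "e \<subseteq> U"
          then obtain p q where "e = {p,q}" using edge by blast
          moreover have "\<forall>y\<in>U. y = x \<or> y \<in> A \<or> y \<in> C" using AC(1) by blast
          moreover have "\<forall>a\<in>A. \<forall>c\<in>C. {c,a} \<notin> E" using AC(5) by (simp add: insert_commute)
          ultimately show "e \<subseteq> insert x A \<or> e \<subseteq> insert x C" using e AC(5)
            by (metis insert_subset subset_insertI insert_mono empty_subsetI insertI1)
        qed
        moreover have "insert x A \<union> insert x C = U" using AC(1) x(1) by auto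
        moreover have "card (insert x A \<inter> insert x C) \<le> 1"
        proof -
          have eq: "insert x A \<inter> insert x C = {x}" using AC(1,2) by blast
          show ?thesis unfolding eq by simp
        qed
        moreover have "insert x A - insert x C \<noteq> {}" "insert x C - insert x A \<noteq> {}"
          using AC by auto
        ultimately show False using nosplit by blast
      qed
      have "biconnected_on V E U" unfolding biconnected_on_def
        using less.prems(1) c2 conn conn2 by auto
      then have c5: "card U \<le> 5" using bc by auto
      have cEU: "card {e\<in>E. e \<subseteq> U} \<le> card U choose 2"
        using card_mono[OF finite_P2[OF finU] EU_sub] card_P2[OF finU] by simp
      have "card U = 2 \<or> card U = 3 \<or> card U = 4 \<or> card U = 5" using c2 c5 by auto
      then show ?thesis
      proof (elim disjE)
        assume "card U = 2" then show ?thesis using cEU by simp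
      next
        assume "card U = 3" then show ?thesis using cEU by (simp add: eval_nat_numeral)
      next
        assume "card U = 4" then show ?thesis using cEU by (simp add: eval_nat_numeral)
      next
        assume u5: "card U = 5"
        show ?thesis
        proof (rule ccontr)
          assume "\<not> ?thesis"
          then have big: "card {e\<in>E. e \<subseteq> U} \<ge> 9" using u5 by simp
          have "P2 U - E \<subseteq> P2 U - {e\<in>E. e \<subseteq> U}" by auto
          then have "card (P2 U - E) \<le> card (P2 U - {e\<in>E. e \<subseteq> U})"
            using finite_P2[OF finU] by (intro card_mono) auto
          also have "\<dots> = card (P2 U) - card {e\<in>E. e \<subseteq> U}"
            using card_Diff_subset[OF finEU EU_sub] .
          also have "card (P2 U) = 10" using card_P2[OF finU] u5 by (simp add: eval_nat_numeral)
          finally have "card (P2 U - E) \<le> card U - 4" using big u5 by simp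
          then have "contains_subgraph K4_verts K4_edges V E"
            using dense_K4[OF finU less.prems(1)] u5 by simp
          then show False using nK4 by simp
        qed
      qed
    qed
  qed
qed

theorem corollary4:
  fixes V :: "'a set" and E :: "'a set set"
  assumes "simple_graph V E"
    and "planar_graph V E"
    and "card V \<ge> 2"
    and "\<not> contains_subgraph K4_verts K4_edges V E"
    and "\<not> contains_subgraph C6_verts C6_edges V E"
    and "\<forall>B. is_block V E B \<longrightarrow> card B \<le> 5"
  shows "real (card E) \<le> 31 / 15 * real (card V) - 7 / 3"
proof -
  have finV: "finite V" using assms(1) unfolding simple_graph_def by blast
  have edge: "\<And>e. e \<in> E \<Longrightarrow> \<exists>u v. u \<in> V \<and> v \<in> V \<and> u \<noteq> v \<and> e = {u,v}"
    using assms(1) unfolding simple_graph_def by blast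
  have bc: "\<forall>S. biconnected_on V E S \<longrightarrow> card S \<le> 5"
  proof (intro allI impI)
    fix S assume S: "biconnected_on V E S"
    let ?K = "{T. biconnected_on V E T \<and> S \<subseteq> T}"
    have finK: "finite ?K" by (rule finite_subset[of _ "Pow V"]) (use finV in \<open>auto simp: biconnected_on_def\<close>)
    have "S \<in> ?K" using S by auto
    have neK: "card ` ?K \<noteq> {}" using \<open>S \<in> ?K\<close> by blast
    obtain T where T1: "T \<in> ?K" "card T = Max (card ` ?K)"
      using Max_in[OF finite_imageI[OF finK] neK] by (auto simp del: Max_in)
    have T2: "\<forall>T'\<in>?K. card T' \<le> card T"
      using T1(2) Max_ge[OF finite_imageI[OF finK]] by auto
    have T: "T \<in> ?K" "\<forall>T'\<in>?K. card T' \<le> card T" using T1(1) T2 by auto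
    have "is_block V E T" unfolding is_block_def
    proof (intro conjI allI impI)
      show "biconnected_on V E T" using T by auto
      fix S' assume S': "biconnected_on V E S' \<and> T \<subseteq> S'"
      then have "S' \<in> ?K" using T by auto
      then have "card S' \<le> card T" using T by auto
        moreover have "finite S'" using S' finV unfolding biconnected_on_def by (meson finite_subset)
      ultimately show "S' = T" using S' card_subset_eq by (metis card_mono le_antisym)
    qed
    then have "card T \<le> 5" using assms(6) by auto
    moreover have "card S \<le> card T"
    proof -
      have "T \<subseteq> V" "S \<subseteq> T" using T(1) unfolding biconnected_on_def by auto
      then show ?thesis using finV by (meson card_mono finite_subset)
    qed
    ultimately show "card S \<le> 5" by simp
  qed
  have EV: "{e\<in>E. e \<subseteq> V} = E" using edge by blast
  have "V \<noteq> {}" using assms(3) by auto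
  then have m: "card E + 2 \<le> 2 * card V"
    using main[OF assms(1) assms(4) bc, of V] EV by simp
  have EP: "E \<subseteq> P2 V" unfolding P2_def using edge by fastforce
  have cE: "card E \<le> card V choose 2"
    using card_mono[OF finite_P2[OF finV] EP] card_P2[OF finV] by simp
  show ?thesis
  proof (cases "card V \<ge> 5")
    case True
    then show ?thesis proof -
      have "real (card E) + 2 \<le> 2 * real (card V)" using m by linarith
      moreover have "real (card V) \<ge> 5" using True by simp
      ultimately show ?thesis by linarith
    qed
  next
    case False
    then have "card V = 2 \<or> card V = 3 \<or> card V = 4" using assms(3) by auto
    then show ?thesis
    proof (elim disjE)
      assume "card V = 2" then show ?thesis using cE by simp
    next
      assume "card V = 3" then show ?thesis using cE by (simp add: eval_nat_numeral)
    next
      assume v4: "card V = 4"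
      have "card E \<le> 5"
      proof (rule ccontr)
        assume "\<not> ?thesis"
        then have big: "card E \<ge> 6" by simp
        have fE: "finite E" using finite_subset[OF EP finite_P2[OF finV]] .
        have "card (P2 V - E) = card (P2 V) - card E" using card_Diff_subset[OF fE EP] .
        also have "card (P2 V) = 6" using card_P2[OF finV] v4 by (simp add: eval_nat_numeral)
        finally have "card (P2 V - E) \<le> card V - 4" using big v4 by simp
        then have "contains_subgraph K4_verts K4_edges V E"
          using dense_K4[OF finV order_refl] v4 by simp
        then show False using assms(4) by simp
      qed
      then show ?thesis using v4 by simp
    qed
  qed
qed

end
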